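(* Let $0<L,W<\infty$, $\tau=iW/L$, $N\in\mathbb{N}$ (with $N\ge2$ when $R_N=D_N$), and $R_N\in\{A_{N-1},B_N,B_N^\vee,C_N,C_N^\vee,BC_N,D_N\}$. For $j,k\in\{1,\dots,N\}$, $$\int_0^Ldx\int_0^Wdy\,\exp\Big(-\frac{2\pi\mathcal{N}}{LW}y^2\Big)\overline{M^{R_N}_j(x+iy)}\,M^{R_N}_k(x+iy)=h^{R_N}_j\delta_{jk},$$ where, writing $e_j=e^{-2\tau\pi iJ(j)^2/\mathcal{N}}$ and $c=LW/\sqrt{2\mathcal{N}\Im\tau}$: $h^{A_{N-1}}_j=c\,e_j$ for all $j$; $h^{R_N}_j=2c\,e_j$ for all $j$ when $R_N=C_N,C_N^\vee,BC_N$; for $R_N=B_N,B_N^\vee$, $h_1=4c\,e_1$ and $h_j=2c\,e_j$ for $j\ge2$; for $R_N=D_N$, $h_j=4c\,e_j$ for $j\in\{1,N\}$ and $h_j=2c\,e_j$ for $j\in\{2,\dots,N-1\}$.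
   Context: Jacobi theta functions ($\Im\tau>0$, $q_0=e^{\pi i\tau}$): $\vartheta_1(v;\tau)=i\sum_{n\in\mathbb{Z}}(-1)^nq_0^{(n-1/2)^2}e^{(2n-1)\pi iv}$, $\vartheta_2(v;\tau)=\sum_{n\in\mathbb{Z}}q_0^{(n-1/2)^2}e^{(2n-1)\pi iv}$. $\mathcal{N}=\mathcal{N}^{R_N}$: $N$ for $A_{N-1}$; $2N-1$ for $B_N$; $2N$ for $B_N^\vee,C_N^\vee$; $2(N+1)$ for $C_N$; $2N+1$ for $BC_N$; $2(N-1)$ for $D_N$. $J(j)=J^{R_N}(j)$: $j-1/2$ for $A_{N-1},C_N^\vee$; $j-1$ for $B_N,B_N^\vee,D_N$; $j$ for $C_N,BC_N$. The functions $M_j=M^{R_N}_j$, $z\in\mathbb{C}$: for $A_{N-1}$, $M_j(z)=e^{2\pi iJ(j)z/L}\vartheta_2(J(j)\tau+\mathcal{N}z/L;\mathcal{N}\tau)$; for $B_N,B_N^\vee$, $M_j(z)=e^{2\pi iJ(j)z/L}\vartheta_1(J(j)\tau+\mathcal{N}z/L;\mathcal{N}\tau)-e^{-2\pi iJ(j)z/L}\vartheta_1(J(j)\tau-\mathcal{N}z/L;\mathcal{N}\tau)$; for $C_N,C_N^\vee,BC_N$, the same expression with $\vartheta_2$ in place of $\vartheta_1$; for $D_N$, $M_j(z)=e^{2\pi iJ(j)z/L}\vartheta_2(J(j)\tau+\mathcal{N}z/L;\mathcal{N}\tau)+e^{-2\pi iJ(j)z/L}\vartheta_2(J(j)\tau-\mathcal{N}z/L;\mathcal{N}\tau)$.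 *)

theory Defs
  imports "HOL-Analysis.Analysis"
begin

definition theta1 :: "complex \<Rightarrow> complex \<Rightarrow> complex" where
  "theta1 v tau = \<i> * (\<Sum>\<^sub>\<infinity>n::int. ((-1::complex) powi n)
      * exp (pi * \<i> * tau * (of_int n - 1/2)^2) * exp ((2 * of_int n - 1) * pi * \<i> * v))"

definition theta2 :: "complex \<Rightarrow> complex \<Rightarrow> complex" where
  "theta2 v tau = (\<Sum>\<^sub>\<infinity>n::int.
      exp (pi * \<i> * tau * (of_int n - 1/2)^2) * exp ((2 * of_int n - 1) * pi * \<i> * v))"

datatype rootsys = A | B | Bv | C | Cv | BC | D
  \<comment> \<open>A stands for A_{N-1}; Bv, Cv for the dual systems B_N^vee, C_N^vee.\<close>

fun calN :: "rootsys \<Rightarrow> nat \<Rightarrow> real" where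
  "calN A N = real N"
| "calN B N = 2 * real N - 1"
| "calN Bv N = 2 * real N"
| "calN Cv N = 2 * real N"
| "calN C N = 2 * (real N + 1)"
| "calN BC N = 2 * real N + 1"
| "calN D N = 2 * (real N - 1)"

fun Jfun :: "rootsys \<Rightarrow> nat \<Rightarrow> real" where
  "Jfun A j = real j - 1/2"
| "Jfun Cv j = real j - 1/2"
| "Jfun B j = real j - 1"
| "Jfun Bv j = real j - 1"
| "Jfun D j = real j - 1"
| "Jfun C j = real j"
| "Jfun BC j = real j"

definition Mfun :: "rootsys \<Rightarrow> nat \<Rightarrow> real \<Rightarrow> complex \<Rightarrow> nat \<Rightarrow> complex \<Rightarrow> complex" where
  "Mfun R N L tau j z =
    (let Jc = complex_of_real (Jfun R j);
         Nc = complex_of_real (calN R N);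
         Lc = complex_of_real L;
         th = (if R = B \<or> R = Bv then theta1 else theta2);
         plus = exp (2 * pi * \<i> * Jc * z / Lc) * th (Jc * tau + Nc * z / Lc) (Nc * tau);
         minus = exp (- 2 * pi * \<i> * Jc * z / Lc) * th (Jc * tau - Nc * z / Lc) (Nc * tau)
     in (if R = A then plus else if R = D then plus + minus else plus - minus))"

definition hconst :: "rootsys \<Rightarrow> nat \<Rightarrow> real \<Rightarrow> real \<Rightarrow> complex \<Rightarrow> nat \<Rightarrow> complex" where
  "hconst R N L W tau j =
    (let e = exp (- 2 * tau * pi * \<i> * (Jfun R j)^2 / calN R N);
         c = L * W / sqrt (2 * calN R N * Im tau);
         m = (if R = A then 1
              else if R = B \<or> R = Bv then (if j = 1 then 4 else 2)
              else if R = D then (if j = 1 \<or> j = N then 4 else 2)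
              else 2)
     in of_real (m * c) * e)"

end

theory Submission
  imports Defs "HOL-Probability.Distributions"
begin

lemma exp_abs_int_summable: "(\<lambda>n::int. exp (- \<bar>real_of_int n\<bar>)) summable_on UNIV"
proof -
  let ?f = "\<lambda>n::int. exp (- \<bar>real_of_int n\<bar>)"
  have geo: "summable (\<lambda>n::nat. exp (- 1::real) ^ n)"
    by (rule summable_geometric) (simp add: abs_of_pos)
  have eqn: "exp (- real n) = exp (-1::real) ^ n" for n :: nat
    using exp_of_nat_mult[of n "-1::real"] by simp
  have g: "(\<lambda>n::nat. exp (- real n)) summable_on UNIV"
    by (rule summable_nonneg_imp_summable_on) (use geo eqn in auto)
  have 1: "?f summable_on range int"
    by (subst summable_on_reindex) (use g in \<open>auto simp: o_def\<close>)
  have "(?f \<circ> (\<lambda>n::nat. - int n - 1)) summable_on UNIV"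
  proof (rule summable_on_comparison_test[OF g])
    fix n :: nat
    show "(?f \<circ> (\<lambda>n::nat. - int n - 1)) n \<le> exp (- real n)" by simp
    show "0 \<le> (?f \<circ> (\<lambda>n::nat. - int n - 1)) n" by simp
  qed
  then have 2: "?f summable_on range (\<lambda>n::nat. - int n - 1)"
    by (subst summable_on_reindex) (auto simp: inj_on_def)
  have U: "UNIV = range int \<union> range (\<lambda>n::nat. - int n - 1)"
  proof -
    have "x \<in> range int \<union> range (\<lambda>n::nat. - int n - 1)" for x :: int
    proof (cases "x \<ge> 0")
      case True then show ?thesis by (metis UnI1 nonneg_int_cases rangeI)
    next
      case False
      then have "x = - int (nat (- x - 1)) - 1" by simp
      then show ?thesis by blast
    qed
    then show ?thesis by blast
  qed
  have "?f summable_on (range int \<union> range (\<lambda>n::nat. - int n - 1))"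
    by (rule summable_on_Un_disjoint[OF 1 2]) auto
  then show ?thesis using U by simp
qed

lemma gauss_bound:
  fixes \<alpha> \<beta> t :: real
  assumes "\<alpha> > 0"
  shows "exp (- \<alpha> * t^2 + \<beta> * \<bar>t\<bar>) \<le> exp ((\<bar>\<beta>\<bar>+1)^2/(4*\<alpha>)) * exp (- \<bar>t\<bar>)"
proof -
  have "0 \<le> \<alpha> * (\<bar>t\<bar> - (\<bar>\<beta>\<bar>+1)/(2*\<alpha>))^2" using assms by simp
  also have "\<alpha> * (\<bar>t\<bar> - (\<bar>\<beta>\<bar>+1)/(2*\<alpha>))^2 = \<alpha> * t^2 - (\<bar>\<beta>\<bar>+1) * \<bar>t\<bar> + (\<bar>\<beta>\<bar>+1)^2/(4*\<alpha>)"
    using assms by (simp add: power2_eq_square field_simps)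
  moreover have "\<beta> * \<bar>t\<bar> \<le> \<bar>\<beta>\<bar> * \<bar>t\<bar>"
    using abs_ge_self[of \<beta>] mult_right_mono[of \<beta> "\<bar>\<beta>\<bar>" "\<bar>t\<bar>"] by auto
  moreover have "(\<bar>\<beta>\<bar>+1) * \<bar>t\<bar> = \<bar>\<beta>\<bar> * \<bar>t\<bar> + \<bar>t\<bar>" by (simp add: distrib_right)
  ultimately have "- \<alpha> * t^2 + \<beta> * \<bar>t\<bar> \<le> (\<bar>\<beta>\<bar>+1)^2/(4*\<alpha>) + (- \<bar>t\<bar>)"
    by linarith
  then have "exp (- \<alpha> * t^2 + \<beta> * \<bar>t\<bar>) \<le> exp ((\<bar>\<beta>\<bar>+1)^2/(4*\<alpha>) + (- \<bar>t\<bar>))"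
    by (simp only: exp_le_cancel_iff)
  then show ?thesis by (simp only: exp_add)
qed

lemma gauss_int_summable:
  fixes \<alpha> \<beta> a K :: real
  assumes "\<alpha> > 0" "K \<ge> 1"
  shows "(\<lambda>n::int. exp (- \<alpha> * (a + K * of_int n)^2 + \<beta> * \<bar>a + K * of_int n\<bar>)) summable_on UNIV"
proof -
  let ?C = "exp ((\<bar>\<beta>\<bar>+1)^2/(4*\<alpha>)) * exp \<bar>a\<bar>"
  have s: "(\<lambda>n::int. ?C * exp (- \<bar>real_of_int n\<bar>)) summable_on UNIV"
    by (rule summable_on_cmult_right[OF exp_abs_int_summable])
  show ?thesis
  proof (rule summable_on_comparison_test[OF s])
    fix n :: int
    have 1: "exp (- \<alpha> * (a + K * of_int n)^2 + \<beta> * \<bar>a + K * of_int n\<bar>)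
        \<le> exp ((\<bar>\<beta>\<bar>+1)^2/(4*\<alpha>)) * exp (- \<bar>a + K * of_int n\<bar>)"
      by (rule gauss_bound[OF assms(1)])
    have 2: "exp (- \<bar>a + K * of_int n\<bar>) \<le> exp \<bar>a\<bar> * exp (- \<bar>real_of_int n\<bar>)"
    proof -
      have "\<bar>real_of_int n\<bar> \<le> \<bar>K * of_int n\<bar>"
        using assms(2) mult_right_mono[of 1 "K" "\<bar>real_of_int n\<bar>"] by (simp add: abs_mult)
      then have "- \<bar>a + K * of_int n\<bar> \<le> \<bar>a\<bar> + (- \<bar>real_of_int n\<bar>)" by linarith
      then have "exp (- \<bar>a + K * of_int n\<bar>) \<le> exp (\<bar>a\<bar> + (- \<bar>real_of_int n\<bar>))"
        by (simp only: exp_le_cancel_iff)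
      then show ?thesis by (simp only: exp_add)
    qed
    have 3: "exp ((\<bar>\<beta>\<bar>+1)^2/(4*\<alpha>)) * exp (- \<bar>a + K * of_int n\<bar>) \<le> exp ((\<bar>\<beta>\<bar>+1)^2/(4*\<alpha>)) * (exp \<bar>a\<bar> * exp (- \<bar>real_of_int n\<bar>))"
      by (rule mult_left_mono[OF 2]) simp
    show "exp (- \<alpha> * (a + K * of_int n)^2 + \<beta> * \<bar>a + K * of_int n\<bar>) \<le> ?C * exp (- \<bar>real_of_int n\<bar>)"
      using order_trans[OF 1 3] by (simp only: mult.assoc)
  qed simp
qed

lemma prod_summable:
  fixes f g :: "'a \<Rightarrow> real"
  assumes "f summable_on UNIV" "g summable_on UNIV" "\<And>x. f x \<ge> 0" "\<And>x. g x \<ge> 0"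
  shows "(\<lambda>(x,y). f x * g y) summable_on UNIV"
proof -
  have "(\<lambda>(x,y). f x * g y) summable_on Sigma UNIV (\<lambda>_. UNIV)"
  proof (rule summable_on_SigmaI)
    show "((\<lambda>y. case (x, y) of (x, y) \<Rightarrow> f x * g y) has_sum f x * infsum g UNIV) UNIV" for x
      using has_sum_cmult_right[OF has_sum_infsum[OF assms(2)], of "f x"] by simp
    show "(\<lambda>x. f x * infsum g UNIV) summable_on UNIV"
      by (rule summable_on_cmult_left[OF assms(1)])
  qed (use assms in auto)
  then show ?thesis by simp
qed

lemma uniform_infsum:
  fixes f :: "'i \<Rightarrow> 'a \<Rightarrow> 'b::banach" and B :: "'i \<Rightarrow> real"
  assumes B: "B summable_on UNIV" and bnd: "\<And>i x. x \<in> S \<Longrightarrow> norm (f i x) \<le> B i"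
  shows "uniform_limit S (\<lambda>F x. \<Sum>i\<in>F. f i x) (\<lambda>x. \<Sum>\<^sub>\<infinity>i. f i x) (finite_subsets_at_top UNIV)"
proof (cases "S = {}")
  case True then show ?thesis by (simp add: uniform_limit_iff)
next
  case False
  then obtain x0 where x0: "x0 \<in> S" by blast
  have Bnn: "B i \<ge> 0" for i
    using bnd[OF x0, of i] norm_ge_zero[of "f i x0"] by linarith
  show ?thesis
    unfolding uniform_limit_iff
  proof (intro allI impI)
    fix e :: real assume e: "e > 0"
    have "(sum B \<longlongrightarrow> infsum B UNIV) (finite_subsets_at_top UNIV)"
      using has_sum_infsum[OF B] by (simp add: has_sum_def)
    then have "\<forall>\<^sub>F F in finite_subsets_at_top UNIV. dist (sum B F) (infsum B UNIV) < e"
      using e tendstoD by blast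
    then have "\<exists>X. finite X \<and> X \<subseteq> UNIV \<and> (\<forall>Y. finite Y \<and> X \<subseteq> Y \<and> Y \<subseteq> UNIV \<longrightarrow> dist (sum B Y) (infsum B UNIV) < e)"
      by (simp only: eventually_finite_subsets_at_top)
    then obtain F0 where F0all: "finite F0 \<and> F0 \<subseteq> UNIV \<and> (\<forall>Y. finite Y \<and> F0 \<subseteq> Y \<and> Y \<subseteq> UNIV \<longrightarrow> dist (sum B Y) (infsum B UNIV) < e)"
      by (elim exE)
    have F0: "finite F0" "\<And>F. finite F \<Longrightarrow> F0 \<subseteq> F \<Longrightarrow> dist (sum B F) (infsum B UNIV) < e"
      using F0all by simp_all
    show "\<forall>\<^sub>F F in finite_subsets_at_top UNIV. \<forall>x\<in>S. dist (\<Sum>i\<in>F. f i x) (\<Sum>\<^sub>\<infinity>i. f i x) < e"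
      unfolding eventually_finite_subsets_at_top
    proof (rule exI[of _ F0], intro conjI allI impI ballI)
      show "finite F0" by (rule F0(1))
      show "F0 \<subseteq> UNIV" by simp
      fix F x assume F: "finite F \<and> F0 \<subseteq> F \<and> F \<subseteq> UNIV" and x: "x \<in> S"
      have Ffin: "finite F" and F0F: "F0 \<subseteq> F" using F by auto
      have abs: "(\<lambda>i. f i x) abs_summable_on UNIV"
        by (rule Infinite_Sum.abs_summable_on_comparison_test'[OF B]) (simp add: bnd[OF x])
      have fsx: "(\<lambda>i. f i x) summable_on UNIV"
        by (rule abs_summable_summable[OF abs])
      have sBF: "B summable_on (UNIV - F)" by (rule summable_on_subset_banach[OF B]) simp
      have fsF: "(\<lambda>i. f i x) summable_on (UNIV - F)" by (rule summable_on_subset_banach[OF fsx]) simp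
      have UF: "F \<union> (UNIV - F) = UNIV" by blast
      have split1: "(\<Sum>\<^sub>\<infinity>i. f i x) = (\<Sum>i\<in>F. f i x) + (\<Sum>\<^sub>\<infinity>i\<in>UNIV - F. f i x)"
        using infsum_Un_disjoint[of "\<lambda>i. f i x" F "UNIV - F"] Ffin fsF UF by simp
      have split2: "infsum B UNIV = sum B F + infsum B (UNIV - F)"
        using infsum_Un_disjoint[of B F "UNIV - F"] Ffin sBF UF by simp
      have "dist (\<Sum>i\<in>F. f i x) (\<Sum>\<^sub>\<infinity>i. f i x) = norm (\<Sum>\<^sub>\<infinity>i\<in>UNIV - F. f i x)"
        unfolding split1 dist_norm by (simp add: norm_minus_commute)
      also have "\<dots> \<le> infsum B (UNIV - F)"
        by (rule norm_infsum_le[OF has_sum_infsum[OF fsF] has_sum_infsum[OF sBF]]) (simp add: bnd[OF x])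
      also have "\<dots> = dist (sum B F) (infsum B UNIV)"
      proof -
        have "infsum B (UNIV - F) \<ge> 0" by (rule infsum_nonneg) (simp add: Bnn)
        then show ?thesis unfolding split2 dist_real_def by simp
      qed
      also have "\<dots> < e" using F0(2)[OF Ffin F0F] .
      finally show "dist (\<Sum>i\<in>F. f i x) (\<Sum>\<^sub>\<infinity>i. f i x) < e" .
    qed
  qed
qed

definition gb :: "real \<Rightarrow> real \<Rightarrow> real \<Rightarrow> real \<Rightarrow> complex \<Rightarrow> complex" where
  "gb L W K \<mu> z = exp (complex_of_real (- pi * W * \<mu>^2 / (L * K))
      + 2 * complex_of_real pi * \<i> * complex_of_real \<mu> * z / complex_of_real L)"

lemma gb_split:
  assumes "L \<noteq> 0"
  shows "gb L W K \<mu> (Complex x y) =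
    complex_of_real (exp (- pi * W * \<mu>^2 / (L * K) - 2 * pi * \<mu> * y / L)) * cis (2 * pi * \<mu> * x / L)"
proof -
  have e: "complex_of_real (- pi * W * \<mu>^2 / (L * K)) + 2 * complex_of_real pi * \<i> * complex_of_real \<mu> * Complex x y / complex_of_real L
     = complex_of_real (- pi * W * \<mu>^2 / (L * K) - 2 * pi * \<mu> * y / L) + \<i> * complex_of_real (2 * pi * \<mu> * x / L)"
    using assms by (simp add: complex_eq_iff Complex_eq Re_divide Im_divide field_simps power2_eq_square)
  show ?thesis
    unfolding gb_def e exp_add cis_conv_exp exp_of_real by (rule refl)
qed

lemma cis_integral:
  fixes L d :: real
  assumes L: "L > 0" and d: "d \<in> \<int>"
  shows "integral {0..L} (\<lambda>x. cis (2 * pi * d * x / L)) = (if d = 0 then complex_of_real L else 0)"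
proof (cases "d = 0")
  case True then show ?thesis using L by (simp add: integral_const_real scaleR_conv_of_real)
next
  case False
  define c where "c = complex_of_real (2 * pi * d / L)"
  have c0: "c \<noteq> 0" using False L by (simp add: c_def)
  define F where "F x = exp (\<i> * c * complex_of_real x) / (\<i> * c)" for x :: real
  have cisx: "cis (2 * pi * d * x / L) = exp (\<i> * c * complex_of_real x)" for x
    unfolding cis_conv_exp c_def by (simp add: field_simps)
  have der: "(F has_vector_derivative cis (2 * pi * d * x / L)) (at x within {0..L})" for x
  proof -
    have d1: "(complex_of_real has_vector_derivative 1) (at x within {0..L})"
      unfolding has_vector_derivative_def
      using has_derivative_of_real[OF has_derivative_ident, of "at x within {0..L}"]
      by (simp add: scaleR_conv_of_real)
    have d2: "((\<lambda>w. exp (\<i> * c * w) / (\<i> * c)) has_field_derivative exp (\<i> * c * complex_of_real x))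
        (at (complex_of_real x) within complex_of_real ` {0..L})"
      using c0 by (auto intro!: derivative_eq_intros)
    have "(((\<lambda>w. exp (\<i> * c * w) / (\<i> * c)) \<circ> complex_of_real) has_vector_derivative
        (1 * exp (\<i> * c * complex_of_real x))) (at x within {0..L})"
      by (rule field_vector_diff_chain_within[OF d1 d2])
    then show ?thesis unfolding F_def cisx by (simp add: o_def)
  qed
  have "((\<lambda>x. cis (2 * pi * d * x / L)) has_integral F L - F 0) {0..L}"
    by (rule fundamental_theorem_of_calculus) (use L der in auto)
  moreover have "F L = F 0"
  proof -
    have "exp (\<i> * c * complex_of_real L) = cis (2 * pi * d)"
      using cisx[of L] L by simp
    also have "\<dots> = 1" using cis_multiple_2pi[OF d] .
    finally show ?thesis unfolding F_def by simp
  qed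
  ultimately show ?thesis using False by (simp add: integral_unique)
qed


definition wt :: "real \<Rightarrow> real \<Rightarrow> real \<Rightarrow> real \<Rightarrow> real" where
  "wt L W K y = exp (- 2 * pi * K / (L * W) * y^2)"

definition Fs :: "real \<Rightarrow> real \<Rightarrow> real \<Rightarrow> real \<Rightarrow> (int \<Rightarrow> complex) \<Rightarrow> complex \<Rightarrow> complex" where
  "Fs L W K a \<epsilon> z = (\<Sum>\<^sub>\<infinity>n::int. \<epsilon> n * gb L W K (a + K * of_int n) z)"

definition Bf :: "real \<Rightarrow> real \<Rightarrow> real \<Rightarrow> (complex \<Rightarrow> complex) \<Rightarrow> (complex \<Rightarrow> complex) \<Rightarrow> complex" where
  "Bf L W K F G = integral {0..L} (\<lambda>x. integral {0..W} (\<lambda>y.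
      complex_of_real (wt L W K y) * cnj (F (Complex x y)) * G (Complex x y)))"

definition BI :: "real \<Rightarrow> real \<Rightarrow> real \<Rightarrow> (complex \<Rightarrow> complex) \<Rightarrow> (complex \<Rightarrow> complex) \<Rightarrow> bool" where
  "BI L W K F G \<longleftrightarrow> (\<forall>x\<in>{0..L}. (\<lambda>y. complex_of_real (wt L W K y) * cnj (F (Complex x y)) * G (Complex x y)) integrable_on {0..W})
     \<and> (\<lambda>x. integral {0..W} (\<lambda>y. complex_of_real (wt L W K y) * cnj (F (Complex x y)) * G (Complex x y))) integrable_on {0..L}"

definition qf :: "real \<Rightarrow> real \<Rightarrow> real \<Rightarrow> real \<Rightarrow> real" where
  "qf L W K t = exp (- (pi * W / (L * K)) * t^2 + (2 * pi * W / L) * \<bar>t\<bar>)"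

definition Ay :: "real \<Rightarrow> real \<Rightarrow> real \<Rightarrow> real \<Rightarrow> real \<Rightarrow> real \<Rightarrow> real" where
  "Ay L W K \<mu> \<nu> y = wt L W K y * exp (- pi * W * \<mu>^2 / (L * K) - 2 * pi * \<mu> * y / L)
       * exp (- pi * W * \<nu>^2 / (L * K) - 2 * pi * \<nu> * y / L)"

definition Phi :: "real \<Rightarrow> real \<Rightarrow> real \<Rightarrow> real \<Rightarrow> real" where
  "Phi L W K \<mu> = integral {0..W} (\<lambda>y. wt L W K (y + W * \<mu> / K))"

lemma integral_of_real_cont:
  fixes f :: "real \<Rightarrow> real" and a b :: real
  assumes "continuous_on {a..b} f"
  shows "integral {a..b} (\<lambda>x. complex_of_real (f x)) = complex_of_real (integral {a..b} f)"
  using integral_linear[OF integrable_continuous_real[OF assms] bounded_linear_of_real]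
  by (simp add: o_def)

lemma infsum_prod_mult:
  fixes f g :: "'a \<Rightarrow> complex"
  assumes "(\<lambda>p. f (fst p) * g (snd p)) summable_on UNIV"
  shows "infsum f UNIV * infsum g UNIV = (\<Sum>\<^sub>\<infinity>p. f (fst p) * g (snd p))"
proof -
  have "(\<Sum>\<^sub>\<infinity>x. \<Sum>\<^sub>\<infinity>y. f x * g y) = infsum (\<lambda>p. f (fst p) * g (snd p)) (Sigma UNIV (\<lambda>_. UNIV))"
    using infsum_Sigma_banach[of "\<lambda>p. f (fst p) * g (snd p)" UNIV "\<lambda>_. UNIV"] assms by simp
  moreover have "(\<Sum>\<^sub>\<infinity>x. \<Sum>\<^sub>\<infinity>y. f x * g y) = infsum f UNIV * infsum g UNIV"
    by (simp add: infsum_cmult_right' infsum_cmult_left')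
  ultimately show ?thesis by simp
qed

context
  fixes L W K :: real
  assumes L: "L > 0" and W: "W > 0" and K: "K \<ge> 1"
begin

lemma wt_pos: "0 < wt L W K y" and wt_le1: "wt L W K y \<le> 1"
proof -
  show "0 < wt L W K y" by (simp add: wt_def)
  have "0 \<le> 2 * pi * K / (L * W) * y^2" using L W K by simp
  then show "wt L W K y \<le> 1" by (simp add: wt_def)
qed

lemma gb_norm: "norm (gb L W K \<mu> (Complex x y)) = exp (- pi * W * \<mu>^2 / (L * K) - 2 * pi * \<mu> * y / L)"
  using L by (simp add: gb_split norm_mult)

lemma exp_le_qf:
  assumes "y \<in> {0..W}"
  shows "exp (- pi * W * \<mu>^2 / (L * K) - 2 * pi * \<mu> * y / L) \<le> qf L W K \<mu>"
proof -
  have "- \<mu> * y \<le> \<bar>\<mu>\<bar> * W"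
  proof -
    have "- \<mu> * y \<le> \<bar>\<mu>\<bar> * y" using assms mult_right_mono[of "-\<mu>" "\<bar>\<mu>\<bar>" y] by auto
    also have "\<dots> \<le> \<bar>\<mu>\<bar> * W" using assms by (simp add: mult_left_mono)
    finally show ?thesis .
  qed
  then have "2 * pi * (- \<mu> * y) \<le> 2 * pi * (\<bar>\<mu>\<bar> * W)"
    by (intro mult_left_mono) auto
  then have "2 * pi * (- \<mu> * y) / L \<le> 2 * pi * (\<bar>\<mu>\<bar> * W) / L"
    using L by (intro divide_right_mono) auto
  then have "- pi * W * \<mu>^2 / (L * K) - 2 * pi * \<mu> * y / L \<le> - (pi * W / (L * K)) * \<mu>^2 + (2 * pi * W / L) * \<bar>\<mu>\<bar>"
    by (simp add: field_simps)
  then show ?thesis unfolding qf_def by simp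
qed

lemma gb_bound: "y \<in> {0..W} \<Longrightarrow> norm (gb L W K \<mu> (Complex x y)) \<le> qf L W K \<mu>"
  using gb_norm exp_le_qf by simp

lemma qf_pos: "qf L W K t > 0" by (simp add: qf_def)

lemma Ay_nonneg: "Ay L W K \<mu> \<nu> y \<ge> 0"
  by (simp add: Ay_def wt_def)

lemma Ay_bound: "y \<in> {0..W} \<Longrightarrow> Ay L W K \<mu> \<nu> y \<le> qf L W K \<mu> * qf L W K \<nu>"
proof -
  assume y: "y \<in> {0..W}"
  have "Ay L W K \<mu> \<nu> y \<le> 1 * (exp (- pi * W * \<mu>^2 / (L * K) - 2 * pi * \<mu> * y / L)
       * exp (- pi * W * \<nu>^2 / (L * K) - 2 * pi * \<nu> * y / L))"
    unfolding Ay_def mult.assoc by (rule mult_right_mono[OF wt_le1]) simp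
  also have "\<dots> = exp (- pi * W * \<mu>^2 / (L * K) - 2 * pi * \<mu> * y / L)
       * exp (- pi * W * \<nu>^2 / (L * K) - 2 * pi * \<nu> * y / L)" by simp
  also have "\<dots> \<le> qf L W K \<mu> * qf L W K \<nu>"
    by (rule mult_mono[OF exp_le_qf[OF y] exp_le_qf[OF y]]) (use qf_pos[of \<mu>] in auto)
  finally show ?thesis .
qed

lemma Ay_cont: "continuous_on S (\<lambda>y. Ay L W K \<mu> \<nu> y)"
  unfolding Ay_def wt_def using L W K by (auto intro!: continuous_intros)

lemma Ay_diag: "Ay L W K \<mu> \<mu> y = wt L W K (y + W * \<mu> / K)"
proof -
  have "- 2 * pi * K / (L * W) * y^2 + (- pi * W * \<mu>^2 / (L * K) - 2 * pi * \<mu> * y / L)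
        + (- pi * W * \<mu>^2 / (L * K) - 2 * pi * \<mu> * y / L)
      = - 2 * pi * K / (L * W) * (y + W * \<mu> / K)^2"
    using L W K by (simp add: field_simps power2_eq_square)
  then show ?thesis unfolding Ay_def wt_def by (simp add: exp_add[symmetric])
qed

lemma term_eq:
  "complex_of_real (wt L W K y) * cnj (e1 * gb L W K \<mu> (Complex x y)) * (e2 * gb L W K \<nu> (Complex x y))
   = (cnj e1 * e2) * complex_of_real (Ay L W K \<mu> \<nu> y) * cis (2 * pi * (\<nu> - \<mu>) * x / L)"
proof -
  have c: "cnj (cis (2 * pi * \<mu> * x / L)) * cis (2 * pi * \<nu> * x / L) = cis (2 * pi * (\<nu> - \<mu>) * x / L)"
    by (simp add: cis_cnj cis_mult algebra_simps diff_divide_distrib)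
  show ?thesis
    using L c unfolding Ay_def by (simp add: gb_split mult_ac)
qed

end

context
  fixes L W K :: real
  assumes L: "L > 0" and W: "W > 0" and K: "K \<ge> 1"
begin

lemma wt_shift_cont: "continuous_on S (\<lambda>y. wt L W K (y + c))"
  unfolding wt_def using L W by (auto intro!: continuous_intros)

lemma ortho_main:
  fixes a b :: real and \<epsilon> \<eta> :: "int \<Rightarrow> complex"
  assumes ab: "a - b \<in> \<int>" and Kint: "K \<in> \<int>"
    and e1: "\<And>n. norm (\<epsilon> n) \<le> 1" and e2: "\<And>n. norm (\<eta> n) \<le> 1"
  shows "BI L W K (Fs L W K a \<epsilon>) (Fs L W K b \<eta>)
    \<and> Bf L W K (Fs L W K a \<epsilon>) (Fs L W K b \<eta>) =
      (\<Sum>\<^sub>\<infinity>p. if a + K * of_int (fst p) = b + K * of_int (snd p)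
        then cnj (\<epsilon> (fst p)) * \<eta> (snd p) * complex_of_real (L * Phi L W K (a + K * of_int (fst p))) else 0)"
proof -
  define \<mu> where "\<mu> n = a + K * of_int n" for n :: int
  define \<nu> where "\<nu> m = b + K * of_int m" for m :: int
  define c where "c p = cnj (\<epsilon> (fst p)) * \<eta> (snd p)" for p :: "int \<times> int"
  define T where "T p x y = c p * complex_of_real (Ay L W K (\<mu> (fst p)) (\<nu> (snd p)) y)
      * cis (2 * pi * (\<nu> (snd p) - \<mu> (fst p)) * x / L)" for p x y
  define Q where "Q p = qf L W K (\<mu> (fst p)) * qf L W K (\<nu> (snd p))" for p :: "int \<times> int"
  define G where "G x y = complex_of_real (wt L W K y) * cnj (Fs L W K a \<epsilon> (Complex x y)) * Fs L W K b \<eta> (Complex x y)" for x y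
  define IA where "IA p = integral {0..W} (\<lambda>y. complex_of_real (Ay L W K (\<mu> (fst p)) (\<nu> (snd p)) y))" for p
  define IT where "IT p x = c p * IA p * cis (2 * pi * (\<nu> (snd p) - \<mu> (fst p)) * x / L)" for p x

  have c_le: "norm (c p) \<le> 1" for p
    unfolding c_def norm_mult complex_mod_cnj by (rule mult_le_one[OF e1 _ e2]) simp
  have alpha: "pi * W / (L * K) > 0" using L W K by simp
  have qs1: "(\<lambda>n. qf L W K (\<mu> n)) summable_on UNIV"
    unfolding qf_def \<mu>_def by (rule gauss_int_summable[OF alpha K])
  have qs2: "(\<lambda>n. qf L W K (\<nu> n)) summable_on UNIV"
    unfolding qf_def \<nu>_def by (rule gauss_int_summable[OF alpha K])
  have Qeq: "Q = (\<lambda>(n, m). qf L W K (\<mu> n) * qf L W K (\<nu> m))"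
    by (auto simp: Q_def fun_eq_iff)
  have Qs: "Q summable_on UNIV"
    unfolding Qeq by (rule prod_summable[OF qs1 qs2]) (simp_all add: less_imp_le qf_pos[OF L W K])
  have Q0: "Q p \<ge> 0" for p
    unfolding Q_def using qf_pos[OF L W K] by (simp add: less_imp_le)

  have Tb: "norm (T p x y) \<le> Q p" if y: "y \<in> {0..W}" for p x y
  proof -
    have "norm (T p x y) = norm (c p) * Ay L W K (\<mu> (fst p)) (\<nu> (snd p)) y"
      unfolding T_def norm_mult using Ay_nonneg[OF L W K] by simp
    also have "\<dots> \<le> 1 * (qf L W K (\<mu> (fst p)) * qf L W K (\<nu> (snd p)))"
      by (rule mult_mono[OF c_le Ay_bound[OF L W K y]]) (simp_all add: Ay_nonneg[OF L W K])
    finally show ?thesis by (simp add: Q_def)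
  qed

  have Tsum: "G x y = (\<Sum>\<^sub>\<infinity>p. T p x y)" if y: "y \<in> {0..W}" for x y
  proof -
    define f where "f n = \<epsilon> n * gb L W K (\<mu> n) (Complex x y)" for n
    define g where "g m = \<eta> m * gb L W K (\<nu> m) (Complex x y)" for m
    have nb: "norm (cnj (f (fst p)) * g (snd p)) \<le> Q p" for p
    proof -
      have "norm (cnj (f (fst p)) * g (snd p))
          = norm (\<epsilon> (fst p)) * norm (gb L W K (\<mu> (fst p)) (Complex x y))
            * (norm (\<eta> (snd p)) * norm (gb L W K (\<nu> (snd p)) (Complex x y)))"
        by (simp add: f_def g_def norm_mult)
      also have "\<dots> \<le> (1 * qf L W K (\<mu> (fst p))) * (1 * qf L W K (\<nu> (snd p)))"
        by (intro mult_mono e1 e2 gb_bound[OF L W K y]) (auto simp: less_imp_le qf_pos[OF L W K])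
      finally show ?thesis by (simp add: Q_def)
    qed
    have fs: "(\<lambda>p. cnj (f (fst p)) * g (snd p)) summable_on UNIV"
      by (rule abs_summable_summable, rule Infinite_Sum.abs_summable_on_comparison_test'[OF Qs]) (rule nb)
    have "G x y = complex_of_real (wt L W K y) * (infsum (\<lambda>n. cnj (f n)) UNIV * infsum g UNIV)"
      unfolding G_def Fs_def f_def g_def \<mu>_def \<nu>_def infsum_cnj by (simp add: mult.assoc)
    also have "\<dots> = complex_of_real (wt L W K y) * (\<Sum>\<^sub>\<infinity>p. cnj (f (fst p)) * g (snd p))"
      using infsum_prod_mult[of "\<lambda>n. cnj (f n)" g] fs by simp
    also have "\<dots> = (\<Sum>\<^sub>\<infinity>p. complex_of_real (wt L W K y) * (cnj (f (fst p)) * g (snd p)))"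
      by (rule infsum_cmult_right'[symmetric])
    also have "\<dots> = (\<Sum>\<^sub>\<infinity>p. T p x y)"
    proof (rule infsum_cong)
      fix p :: "int \<times> int"
      have "complex_of_real (wt L W K y) * (cnj (f (fst p)) * g (snd p))
          = complex_of_real (wt L W K y) * cnj (f (fst p)) * g (snd p)" by (simp only: mult.assoc)
      also have "\<dots> = T p x y"
        unfolding f_def g_def T_def c_def by (rule term_eq[OF L W K])
      finally show "complex_of_real (wt L W K y) * (cnj (f (fst p)) * g (snd p)) = T p x y" .
    qed
    finally show ?thesis .
  qed

  have Tcont: "continuous_on S (\<lambda>y. T p x y)" for S p x
    unfolding T_def by (intro continuous_on_mult_right continuous_on_mult_left continuous_on_of_real Ay_cont[OF L W K])

  have Tint: "((\<lambda>y. T p x y) has_integral IT p x) {0..W}" for p x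
  proof -
    have "(\<lambda>y. T p x y) integrable_on {0..W}"
      by (rule integrable_continuous_interval[OF Tcont])
    moreover have "integral {0..W} (\<lambda>y. T p x y) = IT p x"
      unfolding T_def IT_def IA_def by (simp add: integral_mult_left integral_mult_right)
    ultimately show ?thesis using has_integral_integral by metis
  qed

  have inner: "(G x) integrable_on {0..W} \<and> ((\<lambda>p. IT p x) has_sum integral {0..W} (G x)) UNIV" for x
  proof -
    have U: "uniform_limit {0..W} (\<lambda>F y. \<Sum>p\<in>F. T p x y) (\<lambda>y. \<Sum>\<^sub>\<infinity>p. T p x y) (finite_subsets_at_top UNIV)"
      by (rule uniform_infsum[OF Qs, where f="\<lambda>p y. T p x y" and S="{0..W}"]) (rule Tb)
    have C: "continuous_on {0..W} (\<lambda>y. \<Sum>p\<in>F. T p x y)" for F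
      by (intro continuous_on_sum Tcont)
    obtain I J where I: "\<And>F. ((\<lambda>y. \<Sum>p\<in>F. T p x y) has_integral I F) {0..W}"
      and J: "((\<lambda>y. \<Sum>\<^sub>\<infinity>p. T p x y) has_integral J) {0..W}"
      and lim: "(I \<longlongrightarrow> J) (finite_subsets_at_top UNIV)"
      using uniform_limit_integral[OF U C finite_subsets_at_top_neq_bot] by blast
    have IF: "I F = (\<Sum>p\<in>F. IT p x)" for F
    proof (cases "finite F")
      case True
      have "((\<lambda>y. \<Sum>p\<in>F. T p x y) has_integral (\<Sum>p\<in>F. IT p x)) {0..W}"
        by (rule has_integral_sum[OF True]) (rule Tint)
      then show ?thesis using I[of F] has_integral_unique by blast
    next
      case False
      then show ?thesis using I[of F] has_integral_unique[OF _ has_integral_0] by simp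
    qed
    have IE: "I = (\<lambda>F. \<Sum>p\<in>F. IT p x)" using IF by auto
    have hs: "((\<lambda>p. IT p x) has_sum J) UNIV"
      unfolding has_sum_def using lim IE by simp
    have GJ: "(G x has_integral J) {0..W}"
      using J by (subst has_integral_cong[of _ _ "\<lambda>y. \<Sum>\<^sub>\<infinity>p. T p x y"]) (auto simp: Tsum)
    show ?thesis using GJ hs integral_unique by (metis has_integral_integrable)
  qed

  have ITb: "norm (IT p x) \<le> W * Q p" for p x
  proof -
    have "norm (IA p) \<le> integral {0..W} (\<lambda>y. Q p)"
      unfolding IA_def
    proof (rule integral_norm_bound_integral)
      show "(\<lambda>y. complex_of_real (Ay L W K (\<mu> (fst p)) (\<nu> (snd p)) y)) integrable_on {0..W}"
        by (intro integrable_continuous_interval continuous_on_of_real Ay_cont[OF L W K])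
      show "(\<lambda>y. Q p) integrable_on {0..W}" by (intro integrable_continuous_interval continuous_on_const)
      fix y assume y: "y \<in> {0..W}"
      show "norm (complex_of_real (Ay L W K (\<mu> (fst p)) (\<nu> (snd p)) y)) \<le> Q p"
        using Ay_bound[OF L W K y] Ay_nonneg[OF L W K] by (simp add: Q_def)
    qed
    also have "\<dots> = W * Q p" using W by simp
    finally have nIA: "norm (IA p) \<le> W * Q p" .
    have "norm (IT p x) = norm (c p) * norm (IA p)"
      by (simp add: IT_def norm_mult)
    also have "\<dots> \<le> 1 * (W * Q p)"
      by (rule mult_mono[OF c_le nIA]) simp_all
    finally show ?thesis by simp
  qed

  have ITcont: "continuous_on {0..L} (IT p)" for p
    unfolding IT_def using L by (auto intro!: continuous_intros)

  have U2: "uniform_limit {0..L} (\<lambda>F x. \<Sum>p\<in>F. IT p x) (\<lambda>x. \<Sum>\<^sub>\<infinity>p. IT p x) (finite_subsets_at_top UNIV)"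
    by (rule uniform_infsum[OF summable_on_cmult_right[OF Qs, of W]]) (rule ITb)
  have C2: "continuous_on {0..L} (\<lambda>x. \<Sum>p\<in>F. IT p x)" for F
    by (intro continuous_on_sum ITcont)
  obtain I2 J2 where I2: "\<And>F. ((\<lambda>x. \<Sum>p\<in>F. IT p x) has_integral I2 F) {0..L}"
    and J2: "((\<lambda>x. \<Sum>\<^sub>\<infinity>p. IT p x) has_integral J2) {0..L}"
    and lim2: "(I2 \<longlongrightarrow> J2) (finite_subsets_at_top UNIV)"
    using uniform_limit_integral[OF U2 C2 finite_subsets_at_top_neq_bot] by blast
  have ITi: "(IT p has_integral integral {0..L} (IT p)) {0..L}" for p
    using integrable_continuous_interval[OF ITcont] has_integral_integral by blast
  have I2F: "I2 F = (\<Sum>p\<in>F. integral {0..L} (IT p))" for F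
  proof (cases "finite F")
    case True
    have "((\<lambda>x. \<Sum>p\<in>F. IT p x) has_integral (\<Sum>p\<in>F. integral {0..L} (IT p))) {0..L}"
      by (rule has_integral_sum[OF True]) (rule ITi)
    then show ?thesis using I2[of F] has_integral_unique by blast
  next
    case False
    then show ?thesis using I2[of F] has_integral_unique[OF _ has_integral_0] by simp
  qed
  have hs2: "((\<lambda>p. integral {0..L} (IT p)) has_sum J2) UNIV"
  proof -
    have "I2 = (\<lambda>F. \<Sum>p\<in>F. integral {0..L} (IT p))" using I2F by auto
    then show ?thesis unfolding has_sum_def using lim2 by simp
  qed
  have outer: "((\<lambda>x. integral {0..W} (G x)) has_integral J2) {0..L}"
  proof -
    have eqx: "(\<Sum>\<^sub>\<infinity>p. IT p x) = integral {0..W} (G x)" for x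
      using inner[of x] infsumI by blast
    show ?thesis using J2 by (simp add: eqx)
  qed

  have BIres: "BI L W K (Fs L W K a \<epsilon>) (Fs L W K b \<eta>)"
    unfolding BI_def using inner outer by (auto simp: G_def[abs_def])
  have Bf_eq: "Bf L W K (Fs L W K a \<epsilon>) (Fs L W K b \<eta>) = J2"
    using outer integral_unique unfolding Bf_def G_def by blast
  also have "\<dots> = (\<Sum>\<^sub>\<infinity>p. integral {0..L} (IT p))"
    using hs2 infsumI by metis
  also have "\<dots> = (\<Sum>\<^sub>\<infinity>p. if a + K * of_int (fst p) = b + K * of_int (snd p)
        then cnj (\<epsilon> (fst p)) * \<eta> (snd p) * complex_of_real (L * Phi L W K (a + K * of_int (fst p))) else 0)"
  proof (rule infsum_cong)
    fix p :: "int \<times> int"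
    have dZ: "\<nu> (snd p) - \<mu> (fst p) \<in> \<int>"
    proof -
      have eqn: "\<nu> (snd p) - \<mu> (fst p) = - (a - b) + K * of_int (snd p - fst p)"
        by (simp add: \<mu>_def \<nu>_def algebra_simps)
      have h1: "- (a - b) \<in> \<int>" by (rule Ints_minus[OF ab])
      have h2: "K * of_int (snd p - fst p) \<in> \<int>" by (rule Ints_mult[OF Kint Ints_of_int])
      show ?thesis unfolding eqn by (rule Ints_add[OF h1 h2])
    qed
    have "integral {0..L} (IT p) = c p * IA p * integral {0..L} (\<lambda>x. cis (2 * pi * (\<nu> (snd p) - \<mu> (fst p)) * x / L))"
      unfolding IT_def by (simp add: integral_mult_right)
    also have "\<dots> = c p * IA p * (if \<nu> (snd p) - \<mu> (fst p) = 0 then complex_of_real L else 0)"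
      by (simp only: cis_integral[OF L dZ])
    also have "\<dots> = (if a + K * of_int (fst p) = b + K * of_int (snd p)
        then cnj (\<epsilon> (fst p)) * \<eta> (snd p) * complex_of_real (L * Phi L W K (a + K * of_int (fst p))) else 0)"
    proof (cases "a + K * of_int (fst p) = b + K * of_int (snd p)")
      case True
      then have eq: "\<nu> (snd p) = \<mu> (fst p)" by (simp add: \<mu>_def \<nu>_def)
      have "IA p = integral {0..W} (\<lambda>y. complex_of_real (wt L W K (y + W * \<mu> (fst p) / K)))"
        unfolding IA_def eq Ay_diag[OF L W K] ..
      also have "\<dots> = complex_of_real (Phi L W K (\<mu> (fst p)))"
        unfolding Phi_def by (rule integral_of_real_cont[OF wt_shift_cont])
      finally show ?thesis using True eq by (simp add: c_def \<mu>_def mult_ac)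
    next
      case False
      then have "\<nu> (snd p) - \<mu> (fst p) \<noteq> 0" by (simp add: \<mu>_def \<nu>_def)
      then show ?thesis using False by simp
    qed
    finally show "integral {0..L} (IT p) = (if a + K * of_int (fst p) = b + K * of_int (snd p)
        then cnj (\<epsilon> (fst p)) * \<eta> (snd p) * complex_of_real (L * Phi L W K (a + K * of_int (fst p))) else 0)" .
  qed
  finally show ?thesis using BIres by simp
qed

end

lemma integral_shift_real:
  fixes f :: "real \<Rightarrow> real"
  assumes "f integrable_on {s..s+W}"
  shows "integral {0..W} (\<lambda>y. f (y + s)) = integral {s..s+W} f"
proof -
  have "(f has_integral integral {s..s+W} f) (cbox s (s+W))"
    using assms by (simp add: has_integral_integral)
  then have "((\<lambda>x. f (1 *\<^sub>R x + s)) has_integral integral {s..s+W} f /\<^sub>R 1 ^ DIM(real))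
      (cbox ((s - s) /\<^sub>R 1) ((s + W - s) /\<^sub>R 1))"
    by (subst has_integral_affinity_iff) simp_all
  then have "((\<lambda>y. f (y + s)) has_integral integral {s..s+W} f) {0..W}"
    by simp
  then show ?thesis by (rule integral_unique)
qed

context
  fixes L W K :: real
  assumes L: "L > 0" and W: "W > 0" and K: "K \<ge> 1"
begin

lemma wt_cont: "continuous_on S (wt L W K)"
  unfolding wt_def using L W by (auto intro!: continuous_intros)

lemma wt_integrable: "wt L W K integrable_on {u..v}"
  by (rule integrable_continuous_interval[OF wt_cont])

lemma gauss_total: "(wt L W K has_integral sqrt (L * W / (2 * K))) UNIV"
proof -
  define \<sigma> where "\<sigma> = sqrt (L * W / (4 * pi * K))"
  have pp: "L * W / (4 * pi * K) > 0" using L W K by simp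
  have s0: "\<sigma> > 0" unfolding \<sigma>_def by (rule real_sqrt_gt_zero[OF pp])
  have s2: "\<sigma>^2 = L * W / (4 * pi * K)" using L W K by (simp add: \<sigma>_def)
  have "has_bochner_integral lborel (\<lambda>x. normal_density 0 \<sigma> x * (x - 0) ^ (2 * 0))
      (fact (2 * 0) / ((2 / \<sigma>\<^sup>2) ^ 0 * fact 0))"
    by (rule normal_moment_even[OF s0])
  then have hb: "has_bochner_integral lborel (normal_density 0 \<sigma>) 1" by simp
  have hi: "integrable lborel (normal_density 0 \<sigma>)"
    and hv: "integral\<^sup>L lborel (normal_density 0 \<sigma>) = 1"
    using hb by (simp_all add: has_bochner_integral_iff)
  have "(normal_density 0 \<sigma> has_integral 1) UNIV"
    using has_integral_integral_lborel[OF hi] hv by simp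
  then have "((\<lambda>x. sqrt (2 * pi * \<sigma>^2) * normal_density 0 \<sigma> x) has_integral sqrt (2 * pi * \<sigma>^2) * 1) UNIV"
    by (rule has_integral_mult_right)
  moreover have "sqrt (2 * pi * \<sigma>^2) * normal_density 0 \<sigma> x = wt L W K x" for x
  proof -
    have pos: "sqrt (2 * pi * \<sigma>^2) > 0" using s0 by simp
    have "- (x - 0)\<^sup>2 / (2 * \<sigma>\<^sup>2) = - 2 * pi * K / (L * W) * x^2"
      using L W K unfolding s2 by (simp add: field_simps)
    then show ?thesis using pos s0 unfolding normal_density_def wt_def by simp
  qed
  moreover have "sqrt (2 * pi * \<sigma>^2) = sqrt (L * W / (2 * K))"
    unfolding s2 using K by (simp add: field_simps)
  ultimately show ?thesis by simp
qed

lemma ip_lim: "(\<lambda>N::nat. integral {t - real N * W .. t + real N * W} (wt L W K)) \<longlonglongrightarrow> sqrt (L * W / (2 * K))"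
proof -
  define f where "f N u = (if u \<in> {t - real N * W .. t + real N * W} then wt L W K u else 0)" for N :: nat and u
  have fi: "f N integrable_on UNIV" for N
    unfolding f_def integrable_restrict_UNIV by (rule wt_integrable)
  have hi: "wt L W K integrable_on UNIV" using gauss_total by blast
  have le: "norm (f N u) \<le> wt L W K u" for N u
    unfolding f_def using wt_pos[OF L W K, of u] by auto
  have conv: "(\<lambda>N. f N u) \<longlonglongrightarrow> wt L W K u" for u
  proof (rule tendsto_eventually)
    obtain N0 :: nat where N0: "\<bar>u - t\<bar> / W \<le> real N0" using real_arch_simple by blast
    show "\<forall>\<^sub>F N in sequentially. f N u = wt L W K u"
    proof (rule eventually_sequentiallyI[of N0])
      fix N assume "N0 \<le> N"
      then have "\<bar>u - t\<bar> / W \<le> real N" using N0 by linarith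
      then have "\<bar>u - t\<bar> \<le> real N * W" using W by (simp add: divide_le_eq)
      then have "u \<in> {t - real N * W .. t + real N * W}" by auto
      then show "f N u = wt L W K u" by (simp add: f_def)
    qed
  qed
  have "(\<lambda>N. integral UNIV (f N)) \<longlonglongrightarrow> integral UNIV (wt L W K)"
    by (rule dominated_convergence(2)[OF fi hi]) (use le conv in auto)
  moreover have "integral UNIV (f N) = integral {t - real N * W .. t + real N * W} (wt L W K)" for N
    unfolding f_def by (rule integral_restrict_UNIV)
  moreover have "integral UNIV (wt L W K) = sqrt (L * W / (2 * K))"
    using gauss_total by (rule integral_unique)
  ultimately show ?thesis by simp
qed

lemma Phi_at: "Phi L W K (a + K * of_int n) = integral {W * a / K + W * of_int n .. W * a / K + W * of_int n + W} (wt L W K)"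
proof -
  have e: "W * (a + K * of_int n) / K = W * a / K + W * of_int n" using K by (simp add: field_simps)
  show ?thesis unfolding Phi_def e by (rule integral_shift_real[OF wt_integrable])
qed

lemma Phi_nonneg: "Phi L W K \<mu> \<ge> 0"
  unfolding Phi_def
  by (rule integral_nonneg) (auto intro!: integrable_continuous_interval[OF wt_shift_cont[OF L W K]]
      simp: less_imp_le wt_pos[OF L W K])

lemma ip_combine: "u \<le> v \<Longrightarrow> v \<le> w \<Longrightarrow> integral {u..v} (wt L W K) + integral {v..w} (wt L W K) = integral {u..w} (wt L W K)"
  by (rule Henstock_Kurzweil_Integration.integral_combine) (auto intro: wt_integrable)

lemma partial_sum:
  "(\<Sum>n\<in>{- int N..<int N}. Phi L W K (a + K * of_int n)) = integral {W * a / K - real N * W .. W * a / K + real N * W} (wt L W K)"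
proof (induction N)
  case 0
  then show ?case by simp
next
  case (Suc N)
  define t where "t = W * a / K"
  have set: "{- int (Suc N)..<int (Suc N)} = insert (- int N - 1) (insert (int N) {- int N..<int N})"
    by auto
  have "(\<Sum>n\<in>{- int (Suc N)..<int (Suc N)}. Phi L W K (a + K * of_int n))
      = Phi L W K (a + K * of_int (- int N - 1)) + (Phi L W K (a + K * of_int (int N)) + (\<Sum>n\<in>{- int N..<int N}. Phi L W K (a + K * of_int n)))"
    unfolding set by simp
  also have "Phi L W K (a + K * of_int (- int N - 1)) = integral {t - real (Suc N) * W .. t - real N * W} (wt L W K)"
  proof -
    have e1: "t + W * of_int (- int N - 1) = t - real (Suc N) * W" by (simp add: algebra_simps)
    have e2: "t - real (Suc N) * W + W = t - real N * W" by (simp add: algebra_simps)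
    show ?thesis using Phi_at[of a "- int N - 1"] unfolding t_def[symmetric] e1 e2 .
  qed
  also have "Phi L W K (a + K * of_int (int N)) = integral {t + real N * W .. t + real (Suc N) * W} (wt L W K)"
  proof -
    have e1: "t + W * of_int (int N) = t + real N * W" by (simp add: algebra_simps)
    have e2: "t + real N * W + W = t + real (Suc N) * W" by (simp add: algebra_simps)
    show ?thesis using Phi_at[of a "int N"] unfolding t_def[symmetric] e1 e2 .
  qed
  also have "(\<Sum>n\<in>{- int N..<int N}. Phi L W K (a + K * of_int n)) = integral {t - real N * W .. t + real N * W} (wt L W K)"
    using Suc.IH by (simp add: t_def)
  also have "integral {t - real (Suc N) * W .. t - real N * W} (wt L W K)
      + (integral {t + real N * W .. t + real (Suc N) * W} (wt L W K) + integral {t - real N * W .. t + real N * W} (wt L W K))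
      = integral {t - real (Suc N) * W .. t + real (Suc N) * W} (wt L W K)"
  proof -
    have "integral {t - real N * W .. t + real N * W} (wt L W K) + integral {t + real N * W .. t + real (Suc N) * W} (wt L W K)
        = integral {t - real N * W .. t + real (Suc N) * W} (wt L W K)"
      by (rule ip_combine) (use W mult_nonneg_nonneg[of "real N" W] in \<open>auto simp: algebra_simps\<close>)
    moreover have "integral {t - real (Suc N) * W .. t - real N * W} (wt L W K) + integral {t - real N * W .. t + real (Suc N) * W} (wt L W K)
        = integral {t - real (Suc N) * W .. t + real (Suc N) * W} (wt L W K)"
      by (rule ip_combine) (use W mult_nonneg_nonneg[of "real N" W] in \<open>auto simp: algebra_simps\<close>)
    ultimately show ?thesis by simp
  qed
  finally show ?case by (simp add: t_def)
qed

lemma tiling: "((\<lambda>n::int. Phi L W K (a + K * of_int n)) has_sum sqrt (L * W / (2 * K))) UNIV"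
proof -
  define V where "V = sqrt (L * W / (2 * K))"
  define \<Phi> where "\<Phi> n = Phi L W K (a + K * of_int n)" for n :: int
  define S where "S N = (\<Sum>n\<in>{- int N..<int N}. \<Phi> n)" for N :: nat
  have P0: "\<Phi> n \<ge> 0" for n unfolding \<Phi>_def by (rule Phi_nonneg)
  have SV: "S \<longlonglongrightarrow> V"
    unfolding S_def \<Phi>_def V_def partial_sum by (rule ip_lim)
  have inc: "incseq S"
    unfolding incseq_def S_def by (auto intro!: sum_mono2 P0)
  have SleV: "S N \<le> V" for N by (rule incseq_le[OF inc SV])
  have bound: "sum \<Phi> F \<le> V" if F: "finite F" for F
  proof -
    define N where "N = nat (Max (insert 0 (abs ` F))) + 1"
    have "F \<subseteq> {- int N..<int N}"
    proof
      fix n assume n: "n \<in> F"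
      have "\<bar>n\<bar> \<le> Max (insert 0 (abs ` F))" using F n by (intro Max_ge) auto
      then show "n \<in> {- int N..<int N}" unfolding N_def by auto
    qed
    then have "sum \<Phi> F \<le> S N" unfolding S_def by (intro sum_mono2 P0) auto
    then show ?thesis using SleV[of N] by linarith
  qed
  show ?thesis
    unfolding has_sum_def V_def[symmetric] \<Phi>_def[symmetric]
  proof (rule order_tendstoI)
    fix y assume "y < V"
    then have "\<forall>\<^sub>F N in sequentially. y < S N" using SV order_tendstoD(1) by blast
    then obtain N where N: "y < S N" by (meson eventually_sequentially order_refl)
    show "\<forall>\<^sub>F F in finite_subsets_at_top UNIV. y < sum \<Phi> F"
      unfolding eventually_finite_subsets_at_top
    proof (rule exI[of _ "{- int N..<int N}"], intro conjI allI impI)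
      fix Y assume Y: "finite Y \<and> {- int N..<int N} \<subseteq> Y \<and> Y \<subseteq> UNIV"
      have "S N \<le> sum \<Phi> Y" unfolding S_def using Y by (intro sum_mono2 P0) auto
      then show "y < sum \<Phi> Y" using N by linarith
    qed auto
  next
    fix y assume "V < y"
    then show "\<forall>\<^sub>F F in finite_subsets_at_top UNIV. sum \<Phi> F < y"
      using bound by (intro eventually_finite_subsets_at_top_weakI) (auto intro: le_less_trans)
  qed
qed

end

context
  fixes L W K :: real
  assumes L: "L > 0" and W: "W > 0" and K: "K \<ge> 1"
begin

definition c0 :: complex where "c0 = complex_of_real (L * sqrt (L * W / (2 * K)))"

lemma ortho_zero:
  fixes a b :: real and \<epsilon> \<eta> :: "int \<Rightarrow> complex"
  assumes ab: "a - b \<in> \<int>" and Kint: "K \<in> \<int>"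
    and e1: "\<And>n. norm (\<epsilon> n) \<le> 1" and e2: "\<And>n. norm (\<eta> n) \<le> 1"
    and nr: "\<And>r::int. a - b \<noteq> K * of_int r"
  shows "BI L W K (Fs L W K a \<epsilon>) (Fs L W K b \<eta>) \<and> Bf L W K (Fs L W K a \<epsilon>) (Fs L W K b \<eta>) = 0"
proof -
  note M = ortho_main[OF L W K ab Kint e1 e2]
  have "\<not> (a + K * of_int (fst p) = b + K * of_int (snd p))" for p :: "int \<times> int"
  proof
    assume "a + K * of_int (fst p) = b + K * of_int (snd p)"
    then have "a - b = K * of_int (snd p - fst p)" by (simp add: algebra_simps)
    then show False using nr by blast
  qed
  then show ?thesis using M by simp
qed

lemma ortho_eq:
  fixes a b s :: "real" and \<epsilon> \<eta> :: "int \<Rightarrow> complex" and r :: int and sc :: complex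
  assumes ab: "a - b \<in> \<int>" and Kint: "K \<in> \<int>"
    and e1: "\<And>n. norm (\<epsilon> n) \<le> 1" and e2: "\<And>n. norm (\<eta> n) \<le> 1"
    and r: "a - b = K * of_int r" and sc: "\<And>n. cnj (\<epsilon> n) * \<eta> (n + r) = sc"
  shows "BI L W K (Fs L W K a \<epsilon>) (Fs L W K b \<eta>) \<and> Bf L W K (Fs L W K a \<epsilon>) (Fs L W K b \<eta>) = sc * c0"
proof -
  note M = ortho_main[OF L W K ab Kint e1 e2]
  define f where "f p = (if a + K * of_int (fst p) = b + K * of_int (snd p)
        then cnj (\<epsilon> (fst p)) * \<eta> (snd p) * complex_of_real (L * Phi L W K (a + K * of_int (fst p))) else 0)" for p :: "int \<times> int"
  have cond: "a + K * of_int n = b + K * of_int m \<longleftrightarrow> m = n + r" for n m :: int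
  proof -
    have "a + K * of_int n = b + K * of_int m \<longleftrightarrow> K * of_int r = K * of_int (m - n)"
      using r by (auto simp: algebra_simps)
    also have "\<dots> \<longleftrightarrow> m = n + r" using K by auto
    finally show ?thesis .
  qed
  have "infsum f UNIV = infsum f (range (\<lambda>n. (n, n + r)))"
  proof (rule infsum_cong_neutral)
    fix p assume "p \<in> UNIV - range (\<lambda>n. (n, n + r))"
    then have "snd p \<noteq> fst p + r"
    proof (intro notI)
      assume p: "p \<in> UNIV - range (\<lambda>n. (n, n + r))" and e: "snd p = fst p + r"
      have "p = (\<lambda>n. (n, n + r)) (fst p)" using e by (cases p) simp
      then show False using p by blast
    qed
    then show "f p = 0" unfolding f_def using cond by simp
  qed auto
  also have "\<dots> = infsum (f \<circ> (\<lambda>n. (n, n + r))) UNIV"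
    by (rule infsum_reindex) (auto simp: inj_on_def)
  also have "\<dots> = (\<Sum>\<^sub>\<infinity>n. (sc * complex_of_real L) * complex_of_real (Phi L W K (a + K * of_int n)))"
  proof (rule infsum_cong)
    fix n :: int
    have c: "a + K * of_int n = b + K * of_int (n + r)" using cond[of n "n + r"] by simp
    have "(f \<circ> (\<lambda>n. (n, n + r))) n = cnj (\<epsilon> n) * \<eta> (n + r) * complex_of_real (L * Phi L W K (a + K * of_int n))"
      unfolding o_def f_def using c by simp
    also have "\<dots> = (sc * complex_of_real L) * complex_of_real (Phi L W K (a + K * of_int n))"
      by (simp add: sc mult_ac)
    finally show "(f \<circ> (\<lambda>n. (n, n + r))) n = (sc * complex_of_real L) * complex_of_real (Phi L W K (a + K * of_int n))" .
  qed
  also have "\<dots> = (sc * complex_of_real L) * complex_of_real (sqrt (L * W / (2 * K)))"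
  proof -
    have "((\<lambda>n. complex_of_real (Phi L W K (a + K * of_int n))) has_sum complex_of_real (sqrt (L * W / (2 * K)))) UNIV"
      using tiling[OF L W K] by (simp only: has_sum_of_real_iff)
    then have "((\<lambda>n. (sc * complex_of_real L) * complex_of_real (Phi L W K (a + K * of_int n))) has_sum
        (sc * complex_of_real L) * complex_of_real (sqrt (L * W / (2 * K)))) UNIV"
      by (rule has_sum_cmult_right)
    then show ?thesis by (rule infsumI)
  qed
  finally show ?thesis using M by (simp add: f_def[abs_def] c0_def mult_ac)
qed

lemma not_mult:
  fixes y :: real
  assumes "0 < \<bar>y\<bar>" "\<bar>y\<bar> < K"
  shows "y \<noteq> K * of_int r"
proof
  assume y: "y = K * of_int r"
  then have "r \<noteq> 0" using assms by auto
  then have "1 \<le> \<bar>real_of_int r\<bar>" by linarith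
  then have "K \<le> K * \<bar>real_of_int r\<bar>" using K mult_left_mono[of 1 "\<bar>real_of_int r\<bar>" K] by simp
  also have "\<dots> = \<bar>y\<bar>" using y K by (simp add: abs_mult)
  finally show False using assms by simp
qed

end

lemma Fs_neg:
  "Fs L W K a \<epsilon> (- z) = Fs L W K (- a) (\<lambda>n. \<epsilon> (- n)) z"
proof -
  define g where "g n = \<epsilon> (- n) * gb L W K (- a + K * of_int n) z" for n :: int
  have "Fs L W K (- a) (\<lambda>n. \<epsilon> (- n)) z = infsum g (uminus ` UNIV)"
    unfolding Fs_def g_def by (simp add: surj_def[symmetric] surj_uminus)
  also have "\<dots> = infsum (g \<circ> uminus) UNIV"
    by (rule infsum_reindex) simp
  also have "\<dots> = Fs L W K a \<epsilon> (- z)"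
    unfolding Fs_def g_def o_def
  proof (rule infsum_cong)
    fix n :: int
    have "gb L W K (- a + K * of_int (- n)) z = gb L W K (a + K * of_int n) (- z)"
      unfolding gb_def by (simp add: power2_eq_square algebra_simps)
    then show "\<epsilon> (- (- n)) * gb L W K (- a + K * of_int (- n)) z = \<epsilon> n * gb L W K (a + K * of_int n) (- z)"
      by simp
  qed
  finally show ?thesis by simp
qed

lemma key_exp:
  fixes L W K J :: real and z :: complex and n :: int
  assumes L: "L > 0" and K: "K > 0"
  shows "exp (complex_of_real (2*pi) * \<i> * complex_of_real J * z / complex_of_real L)
     * (exp (complex_of_real pi * \<i> * (complex_of_real K * (\<i> * complex_of_real (W / L))) * (complex_of_int n - 1/2)^2)
     * exp (complex_of_real ((2 * real_of_int n - 1) * pi) * \<i> * (complex_of_real J * (\<i> * complex_of_real (W / L)) + complex_of_real K * z / complex_of_real L)))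
   = complex_of_real (exp (pi * W * J^2 / (L * K))) * gb L W K (J - K/2 + K * of_int n) z"
proof -
  have l: "complex_of_real L \<noteq> 0" and k: "complex_of_real K \<noteq> 0" using L K by auto
  have e: "complex_of_real (2*pi) * \<i> * complex_of_real J * z / complex_of_real L
     + (complex_of_real pi * \<i> * (complex_of_real K * (\<i> * complex_of_real (W / L))) * (complex_of_int n - 1/2)^2
     + complex_of_real ((2 * real_of_int n - 1) * pi) * \<i> * (complex_of_real J * (\<i> * complex_of_real (W / L)) + complex_of_real K * z / complex_of_real L))
   = complex_of_real (pi * W * J^2 / (L * K)) + (complex_of_real (- pi * W * (J - K/2 + K * of_int n)^2 / (L * K))
      + 2 * complex_of_real pi * \<i> * complex_of_real (J - K/2 + K * of_int n) * z / complex_of_real L)"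
    using l k by (simp add: field_simps power2_eq_square)
  show ?thesis
    unfolding gb_def exp_of_real[symmetric] exp_add[symmetric] e ..
qed

definition eps :: "rootsys \<Rightarrow> int \<Rightarrow> complex" where
  "eps R = (if R = B \<or> R = Bv then (\<lambda>n. \<i> * (- 1) powi n) else (\<lambda>n. 1))"

definition sg :: "rootsys \<Rightarrow> real" where
  "sg R = (if R = A then 0 else if R = D then 1 else - 1)"

lemma eps_norm: "norm (eps R n) = 1"
  by (simp add: eps_def norm_mult norm_power_int)

lemma eps_neg: "eps R (- n) = eps R n"
  by (simp add: eps_def power_int_minus_one_minus)

lemma plus_rep:
  fixes L W K J :: real and z tau :: complex
  assumes L: "L > 0" and K: "K > 0" and tau: "tau = \<i> * complex_of_real (W / L)"
  shows "exp (complex_of_real (2 * pi) * \<i> * complex_of_real J * z / complex_of_real L) *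
         (if R = B \<or> R = Bv then theta1 else theta2) (complex_of_real J * tau + complex_of_real K * z / complex_of_real L) (complex_of_real K * tau)
       = complex_of_real (exp (pi * W * J^2 / (L * K))) * Fs L W K (J - K/2) (eps R) z"
proof -
  let ?E = "exp (complex_of_real (2 * pi) * \<i> * complex_of_real J * z / complex_of_real L)"
  let ?k = "complex_of_real (exp (pi * W * J^2 / (L * K)))"
  define t where "t n = exp (complex_of_real pi * \<i> * (complex_of_real K * tau) * (complex_of_int n - 1/2)^2)
     * exp (complex_of_real ((2 * real_of_int n - 1) * pi) * \<i> * (complex_of_real J * tau + complex_of_real K * z / complex_of_real L))" for n :: int
  have kt: "?E * t n = ?k * gb L W K (J - K/2 + K * of_int n) z" for n
    unfolding t_def tau by (rule key_exp[OF L K])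
  have Fs_eq: "Fs L W K (J - K/2) (eps R) z = (\<Sum>\<^sub>\<infinity>n. eps R n * gb L W K (J - K/2 + K * of_int n) z)"
    by (simp add: Fs_def)
  show ?thesis
  proof (cases "R = B \<or> R = Bv")
    case True
    have "?E * theta1 (complex_of_real J * tau + complex_of_real K * z / complex_of_real L) (complex_of_real K * tau)
        = (\<Sum>\<^sub>\<infinity>n. ?E * (\<i> * ((- 1) powi n * t n)))"
      unfolding theta1_def t_def by (simp add: infsum_cmult_right' mult.assoc)
    also have "\<dots> = (\<Sum>\<^sub>\<infinity>n. ?k * (eps R n * gb L W K (J - K/2 + K * of_int n) z))"
    proof (rule infsum_cong)
      fix n
      have "?E * (\<i> * ((- 1) powi n * t n)) = (\<i> * (- 1) powi n) * (?E * t n)" by (simp add: mult_ac)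
      also have "\<dots> = ?k * (eps R n * gb L W K (J - K/2 + K * of_int n) z)"
        unfolding kt using True by (simp add: eps_def mult_ac)
      finally show "?E * (\<i> * ((- 1) powi n * t n)) = ?k * (eps R n * gb L W K (J - K/2 + K * of_int n) z)" .
    qed
    also have "\<dots> = ?k * Fs L W K (J - K/2) (eps R) z"
      unfolding Fs_eq by (rule infsum_cmult_right')
    finally show ?thesis using True by simp
  next
    case False
    have "?E * theta2 (complex_of_real J * tau + complex_of_real K * z / complex_of_real L) (complex_of_real K * tau)
        = (\<Sum>\<^sub>\<infinity>n. ?E * t n)"
      unfolding theta2_def t_def by (simp add: infsum_cmult_right')
    also have "\<dots> = (\<Sum>\<^sub>\<infinity>n. ?k * (eps R n * gb L W K (J - K/2 + K * of_int n) z))"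
    proof (rule infsum_cong)
      fix n
      have e: "eps R n = 1" using False by (simp add: eps_def)
      show "?E * t n = ?k * (eps R n * gb L W K (J - K/2 + K * of_int n) z)"
        unfolding e mult_1_left by (rule kt)
    qed
    also have "\<dots> = ?k * Fs L W K (J - K/2) (eps R) z"
      unfolding Fs_eq by (rule infsum_cmult_right')
    finally show ?thesis using False by simp
  qed
qed

lemma Mfun_rep:
  fixes L W :: real and tau z :: complex
  assumes L: "L > 0" and K: "calN R N > 0" and tau: "tau = \<i> * complex_of_real (W / L)"
  shows "Mfun R N L tau j z = complex_of_real (exp (pi * W * (Jfun R j)^2 / (L * calN R N)))
      * (Fs L W (calN R N) (Jfun R j - calN R N / 2) (eps R) z
         + complex_of_real (sg R) * Fs L W (calN R N) (- (Jfun R j - calN R N / 2)) (eps R) z)"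
proof -
  let ?J = "Jfun R j" and ?K = "calN R N"
  let ?th = "if R = B \<or> R = Bv then theta1 else theta2"
  let ?k = "complex_of_real (exp (pi * W * ?J^2 / (L * ?K)))"
  have P: "exp (complex_of_real (2 * pi) * \<i> * complex_of_real ?J * z / complex_of_real L) *
         ?th (complex_of_real ?J * tau + complex_of_real ?K * z / complex_of_real L) (complex_of_real ?K * tau)
       = ?k * Fs L W ?K (?J - ?K/2) (eps R) z"
    by (rule plus_rep[OF L K tau])
  have "exp (complex_of_real (- 2 * pi) * \<i> * complex_of_real ?J * z / complex_of_real L) *
         ?th (complex_of_real ?J * tau - complex_of_real ?K * z / complex_of_real L) (complex_of_real ?K * tau)
      = exp (complex_of_real (2 * pi) * \<i> * complex_of_real ?J * (- z) / complex_of_real L) *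
         ?th (complex_of_real ?J * tau + complex_of_real ?K * (- z) / complex_of_real L) (complex_of_real ?K * tau)"
    by simp
  also have "\<dots> = ?k * Fs L W ?K (?J - ?K/2) (eps R) (- z)"
    by (rule plus_rep[OF L K tau])
  also have "\<dots> = ?k * Fs L W ?K (- (?J - ?K/2)) (eps R) z"
    by (simp add: Fs_neg eps_neg)
  finally have Mi: "exp (complex_of_real (- 2 * pi) * \<i> * complex_of_real ?J * z / complex_of_real L) *
         ?th (complex_of_real ?J * tau - complex_of_real ?K * z / complex_of_real L) (complex_of_real ?K * tau)
      = ?k * Fs L W ?K (- (?J - ?K/2)) (eps R) z" .
  show ?thesis
    unfolding Mfun_def Let_def P Mi by (simp add: sg_def algebra_simps)
qed


lemma lin4:
  fixes f1 f2 f3 f4 :: "real \<Rightarrow> complex"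
  assumes "f1 integrable_on S" "f2 integrable_on S" "f3 integrable_on S" "f4 integrable_on S"
  shows "integral S (\<lambda>x. c * (f1 x + s1 * f2 x + s2 * f3 x + s3 * f4 x))
       = c * (integral S f1 + s1 * integral S f2 + s2 * integral S f3 + s3 * integral S f4)"
proof -
  have i2: "(\<lambda>x. s1 * f2 x) integrable_on S" by (rule integrable_on_mult_right[OF assms(2)])
  have i3: "(\<lambda>x. s2 * f3 x) integrable_on S" by (rule integrable_on_mult_right[OF assms(3)])
  have i4: "(\<lambda>x. s3 * f4 x) integrable_on S" by (rule integrable_on_mult_right[OF assms(4)])
  have "integral S (\<lambda>x. c * (f1 x + s1 * f2 x + s2 * f3 x + s3 * f4 x))
      = c * integral S (\<lambda>x. f1 x + s1 * f2 x + s2 * f3 x + s3 * f4 x)"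
    by (rule integral_mult_right)
  also have "integral S (\<lambda>x. f1 x + s1 * f2 x + s2 * f3 x + s3 * f4 x)
      = integral S (\<lambda>x. f1 x + s1 * f2 x + s2 * f3 x) + integral S (\<lambda>x. s3 * f4 x)"
    by (rule integral_add[OF integrable_add[OF integrable_add[OF assms(1) i2] i3] i4])
  also have "integral S (\<lambda>x. f1 x + s1 * f2 x + s2 * f3 x)
      = integral S (\<lambda>x. f1 x + s1 * f2 x) + integral S (\<lambda>x. s2 * f3 x)"
    by (rule integral_add[OF integrable_add[OF assms(1) i2] i3])
  also have "integral S (\<lambda>x. f1 x + s1 * f2 x) = integral S f1 + integral S (\<lambda>x. s1 * f2 x)"
    by (rule integral_add[OF assms(1) i2])
  finally show ?thesis by (simp add: integral_mult_right)
qed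

lemma Bf_expand:
  assumes B11: "BI L W K F1 G1" and B12: "BI L W K F1 G2" and B21: "BI L W K F2 G1" and B22: "BI L W K F2 G2"
    and M1: "\<And>z. M1 z = complex_of_real k1 * (F1 z + complex_of_real s * F2 z)"
    and M2: "\<And>z. M2 z = complex_of_real k2 * (G1 z + complex_of_real s * G2 z)"
  shows "Bf L W K M1 M2 = complex_of_real (k1 * k2) * (Bf L W K F1 G1 + complex_of_real s * Bf L W K F1 G2
      + complex_of_real s * Bf L W K F2 G1 + complex_of_real (s * s) * Bf L W K F2 G2)"
proof -
  define h where "h F G x y = complex_of_real (wt L W K y) * cnj (F (Complex x y)) * G (Complex x y)" for F G :: "complex \<Rightarrow> complex" and x y
  define I where "I F G x = integral {0..W} (h F G x)" for F G x
  have pt: "h M1 M2 x y = complex_of_real (k1 * k2) * (h F1 G1 x y + complex_of_real s * h F1 G2 x y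
      + complex_of_real s * h F2 G1 x y + complex_of_real (s * s) * h F2 G2 x y)" for x y
    unfolding h_def M1 M2 by (simp add: algebra_simps)
  have inner: "I M1 M2 x = complex_of_real (k1 * k2) * (I F1 G1 x + complex_of_real s * I F1 G2 x
      + complex_of_real s * I F2 G1 x + complex_of_real (s * s) * I F2 G2 x)" if x: "x \<in> {0..L}" for x
    unfolding I_def pt
    by (rule lin4) (use B11 B12 B21 B22 x in \<open>auto simp: BI_def h_def[abs_def]\<close>)
  have "Bf L W K M1 M2 = integral {0..L} (I M1 M2)"
    unfolding Bf_def I_def h_def ..
  also have "\<dots> = integral {0..L} (\<lambda>x. complex_of_real (k1 * k2) * (I F1 G1 x + complex_of_real s * I F1 G2 x
      + complex_of_real s * I F2 G1 x + complex_of_real (s * s) * I F2 G2 x))"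
    by (rule Henstock_Kurzweil_Integration.integral_cong) (rule inner)
  also have "\<dots> = complex_of_real (k1 * k2) * (integral {0..L} (I F1 G1) + complex_of_real s * integral {0..L} (I F1 G2)
      + complex_of_real s * integral {0..L} (I F2 G1) + complex_of_real (s * s) * integral {0..L} (I F2 G2))"
    by (rule lin4) (use B11 B12 B21 B22 in \<open>auto simp: BI_def I_def h_def[abs_def]\<close>)
  finally show ?thesis unfolding Bf_def I_def h_def .
qed

lemma eps_prod: "cnj (eps R n) * eps R (n + r) = (if R = B \<or> R = Bv then (- 1) powi r else 1)"
proof -
  have m: "(- 1 :: complex) \<noteq> 0" by simp
  have c: "cnj ((- 1 :: complex) powi n) = (- 1) powi n"
    by (simp add: power_int_def)
  have "cnj (\<i> * (- 1) powi n) * (\<i> * (- 1) powi (n + r)) = ((- 1 :: complex) powi n * (- 1) powi n) * (- 1) powi r"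
    by (simp add: c power_int_add mult_ac)
  then show ?thesis by (simp add: eps_def power_int_minus_one_mult_self)
qed

lemma eps_sq: "cnj (eps R n) * eps R n = 1"
  using eps_prod[of R n 0] by (simp split: if_splits)


context
  fixes L W K :: real
  assumes L: "L > 0" and W: "W > 0" and K: "K \<ge> 1"
begin

lemma cross_zero:
  fixes a b :: real and \<epsilon> :: "int \<Rightarrow> complex"
  assumes ab: "a + b \<in> \<int>" and Kint: "K \<in> \<int>" and e: "\<And>n. norm (\<epsilon> n) \<le> 1"
    and p1: "0 < - (a + b)" and p2: "- (a + b) < K"
  shows "BI L W K (Fs L W K a \<epsilon>) (Fs L W K (- b) \<epsilon>) \<and> Bf L W K (Fs L W K a \<epsilon>) (Fs L W K (- b) \<epsilon>) = 0"
    and "BI L W K (Fs L W K (- a) \<epsilon>) (Fs L W K b \<epsilon>) \<and> Bf L W K (Fs L W K (- a) \<epsilon>) (Fs L W K b \<epsilon>) = 0"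
proof -
  show "BI L W K (Fs L W K a \<epsilon>) (Fs L W K (- b) \<epsilon>) \<and> Bf L W K (Fs L W K a \<epsilon>) (Fs L W K (- b) \<epsilon>) = 0"
  proof (rule ortho_zero[OF L W K _ Kint e e])
    show "a - - b \<in> \<int>" using ab by simp
    fix r :: int
    show "a - - b \<noteq> K * of_int r" using not_mult[OF L W K, of "a + b" r] p1 p2 by simp
  qed
  show "BI L W K (Fs L W K (- a) \<epsilon>) (Fs L W K b \<epsilon>) \<and> Bf L W K (Fs L W K (- a) \<epsilon>) (Fs L W K b \<epsilon>) = 0"
  proof (rule ortho_zero[OF L W K _ Kint e e])
    show "- a - b \<in> \<int>" using Ints_minus[OF ab] by simp
    fix r :: int
    show "- a - b \<noteq> K * of_int r" using not_mult[OF L W K, of "- (a + b)" r] p1 p2 by simp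
  qed
qed

lemma cross_eq:
  fixes a b :: real and \<epsilon> :: "int \<Rightarrow> complex" and r :: int
  assumes r: "a + b = K * of_int r" and Kint: "K \<in> \<int>" and e: "\<And>n. norm (\<epsilon> n) \<le> 1"
    and s1: "\<And>n. cnj (\<epsilon> n) * \<epsilon> (n + r) = c1" and s2: "\<And>n. cnj (\<epsilon> n) * \<epsilon> (n + - r) = c2"
  shows "BI L W K (Fs L W K a \<epsilon>) (Fs L W K (- b) \<epsilon>) \<and> Bf L W K (Fs L W K a \<epsilon>) (Fs L W K (- b) \<epsilon>) = c1 * c0 L W K"
    and "BI L W K (Fs L W K (- a) \<epsilon>) (Fs L W K b \<epsilon>) \<and> Bf L W K (Fs L W K (- a) \<epsilon>) (Fs L W K b \<epsilon>) = c2 * c0 L W K"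
proof -
  have abZ: "a + b \<in> \<int>" unfolding r using Kint by (simp add: Ints_mult)
  show "BI L W K (Fs L W K a \<epsilon>) (Fs L W K (- b) \<epsilon>) \<and> Bf L W K (Fs L W K a \<epsilon>) (Fs L W K (- b) \<epsilon>) = c1 * c0 L W K"
  proof -
    have h1: "a - - b \<in> \<int>" using abZ by simp
    have h2: "a - - b = K * of_int r" using r by simp
    show ?thesis by (rule ortho_eq[where a=a and b="- b" and \<epsilon>=\<epsilon> and \<eta>=\<epsilon> and r=r and sc=c1, OF L W K h1 Kint e e h2 s1])
  qed
  show "BI L W K (Fs L W K (- a) \<epsilon>) (Fs L W K b \<epsilon>) \<and> Bf L W K (Fs L W K (- a) \<epsilon>) (Fs L W K b \<epsilon>) = c2 * c0 L W K"
  proof -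
    have h1: "- a - b \<in> \<int>" using Ints_minus[OF abZ] by simp
    have h2: "- a - b = K * of_int (- r)" using r by simp
    show ?thesis by (rule ortho_eq[where a="- a" and b=b and \<epsilon>=\<epsilon> and \<eta>=\<epsilon> and r="- r" and sc=c2, OF L W K h1 Kint e e h2 s2])
  qed
qed

lemma diag_vals:
  fixes a b :: real and \<epsilon> :: "int \<Rightarrow> complex"
  assumes ab: "a - b \<in> \<int>" and Kint: "K \<in> \<int>" and e1: "\<And>n. norm (\<epsilon> n) \<le> 1"
    and e2: "\<And>n. cnj (\<epsilon> n) * \<epsilon> n = 1"
    and lt: "\<bar>a - b\<bar> < K"
  shows "BI L W K (Fs L W K a \<epsilon>) (Fs L W K b \<epsilon>) \<and> Bf L W K (Fs L W K a \<epsilon>) (Fs L W K b \<epsilon>) = (if a = b then c0 L W K else 0)"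
proof (cases "a = b")
  case True
  have "BI L W K (Fs L W K a \<epsilon>) (Fs L W K b \<epsilon>) \<and> Bf L W K (Fs L W K a \<epsilon>) (Fs L W K b \<epsilon>) = 1 * c0 L W K"
  proof -
    have h2: "a - b = K * of_int 0" using True by simp
    have s0: "cnj (\<epsilon> n) * \<epsilon> (n + 0) = 1" for n using e2 by simp
    show ?thesis by (rule ortho_eq[where a=a and b=b and \<epsilon>=\<epsilon> and \<eta>=\<epsilon> and r=0 and sc=1, OF L W K ab Kint e1 e1 h2 s0])
  qed
  then show ?thesis using True by simp
next
  case False
  have "BI L W K (Fs L W K a \<epsilon>) (Fs L W K b \<epsilon>) \<and> Bf L W K (Fs L W K a \<epsilon>) (Fs L W K b \<epsilon>) = 0"
  proof (rule ortho_zero[OF L W K ab Kint e1 e1])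
    fix r :: int
    show "a - b \<noteq> K * of_int r" using not_mult[OF L W K, of "a - b" r] False lt by simp
  qed
  then show ?thesis using False by simp
qed

end

lemma aux_div:
  fixes A B L W :: real
  assumes h: "A * B = W" and p: "B > 0"
  shows "L * W / B = L * A"
proof -
  have "L * W / B = L * A * B / B" using h by (simp add: mult.assoc)
  also have "\<dots> = L * A" using p by simp
  finally show ?thesis .
qed

theorem proposition2p4:
  fixes L W :: real and R :: rootsys and N j k :: nat and tau :: complex
  assumes "0 < L" and "0 < W"
    and "tau = \<i> * complex_of_real (W / L)"
    and "R = D \<longrightarrow> 2 \<le> N"
    and "j \<in> {1..N}" and "k \<in> {1..N}"
  shows "integral {0..L} (\<lambda>x. integral {0..W} (\<lambda>y.
            complex_of_real (exp (- 2 * pi * calN R N / (L * W) * y^2))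
            * cnj (Mfun R N L tau j (Complex x y)) * Mfun R N L tau k (Complex x y)))
         = (if j = k then hconst R N L W tau j else 0)"
proof -
  note L = assms(1) and W = assms(2) and tau = assms(3)
  have j1: "1 \<le> j" "j \<le> N" and k1: "1 \<le> k" "k \<le> N" using assms(5,6) by auto
  define K where "K = calN R N"
  have KN: "real N \<le> K" and K1: "K \<ge> 1"
    using j1 assms(4) unfolding K_def by (cases R; auto)+
  have Kint: "K \<in> \<int>"
    unfolding K_def by (cases R) (simp_all add: Ints_diff Ints_mult Ints_add)
  have Kpos: "calN R N > 0" using K1 K_def by simp
  define J where "J = Jfun R j"
  define J' where "J' = Jfun R k"
  define a where "a = J - K / 2"
  define b where "b = J' - K / 2"
  define k1 where "k1 = exp (pi * W * J^2 / (L * K))"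
  define k2 where "k2 = exp (pi * W * J'^2 / (L * K))"
  let ?e = "eps R"
  let ?F = "Fs L W K"
  have Mj: "Mfun R N L tau j z = complex_of_real k1 * (?F a ?e z + complex_of_real (sg R) * ?F (- a) ?e z)" for z
    unfolding K_def J_def a_def k1_def by (rule Mfun_rep[OF L Kpos tau])
  have Mk: "Mfun R N L tau k z = complex_of_real k2 * (?F b ?e z + complex_of_real (sg R) * ?F (- b) ?e z)" for z
    unfolding K_def J'_def b_def k2_def by (rule Mfun_rep[OF L Kpos tau])
  have e1: "norm (?e n) \<le> 1" for n by (simp add: eps_norm)
  have dJ: "J - J' = real j - real k" unfolding J_def J'_def by (cases R) simp_all
  have sJ: "J + J' \<in> \<int>"
  proof -
    have "J + J' = real j + real k - 1 \<or> J + J' = real j + real k - 2 \<or> J + J' = real j + real k"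
      unfolding J_def J'_def by (cases R) simp_all
    then show ?thesis by (auto simp: Ints_diff Ints_add)
  qed
  have abZ: "a - b \<in> \<int>" using dJ by (simp add: a_def b_def)
  have baZ: "- a - - b \<in> \<int>" using Ints_minus[OF abZ] by simp
  have apbZ: "a + b \<in> \<int>"
  proof -
    have "a + b = (J + J') - K" by (simp add: a_def b_def)
    then show ?thesis using sJ Kint by (simp add: Ints_diff)
  qed
  have ltjk: "\<bar>a - b\<bar> < K"
  proof -
    have "\<bar>real j - real k\<bar> < real N" using j1 k1 by linarith
    then show ?thesis using dJ KN by (simp add: a_def b_def)
  qed
  have D11: "BI L W K (?F a ?e) (?F b ?e) \<and> Bf L W K (?F a ?e) (?F b ?e) = (if a = b then c0 L W K else 0)"
    by (rule diag_vals[OF L W K1 abZ Kint e1 eps_sq ltjk])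
  have D22: "BI L W K (?F (- a) ?e) (?F (- b) ?e) \<and> Bf L W K (?F (- a) ?e) (?F (- b) ?e) = (if a = b then c0 L W K else 0)"
    using diag_vals[OF L W K1 baZ Kint e1 eps_sq] ltjk by (simp add: abs_minus_commute)
  have ab_iff: "a = b \<longleftrightarrow> j = k"
  proof -
    have "a = b \<longleftrightarrow> J - J' = 0" by (auto simp: a_def b_def)
    also have "\<dots> \<longleftrightarrow> j = k" using dJ by simp
    finally show ?thesis .
  qed
  have BI12: "BI L W K (?F a ?e) (?F (- b) ?e)"
    using ortho_main[OF L W K1 _ Kint e1 e1, of a "- b"] apbZ by simp
  have BI21: "BI L W K (?F (- a) ?e) (?F b ?e)"
    using ortho_main[OF L W K1 _ Kint e1 e1, of "- a" b] Ints_minus[OF apbZ] by simp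
  have expand: "Bf L W K (Mfun R N L tau j) (Mfun R N L tau k) =
      complex_of_real (k1 * k2) * (Bf L W K (?F a ?e) (?F b ?e) + complex_of_real (sg R) * Bf L W K (?F a ?e) (?F (- b) ?e)
      + complex_of_real (sg R) * Bf L W K (?F (- a) ?e) (?F b ?e) + complex_of_real (sg R * sg R) * Bf L W K (?F (- a) ?e) (?F (- b) ?e))"
    by (rule Bf_expand[OF _ BI12 BI21]) (use D11 D22 Mj Mk in auto)
  have LHS: "integral {0..L} (\<lambda>x. integral {0..W} (\<lambda>y.
            complex_of_real (exp (- 2 * pi * calN R N / (L * W) * y^2))
            * cnj (Mfun R N L tau j (Complex x y)) * Mfun R N L tau k (Complex x y)))
      = Bf L W K (Mfun R N L tau j) (Mfun R N L tau k)"
    unfolding Bf_def wt_def K_def ..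
  define coin where "coin \<longleftrightarrow> j = k \<and> (((R = B \<or> R = Bv) \<and> j = 1) \<or> (R = D \<and> (j = 1 \<or> j = N)))"
  define \<beta> where "\<beta> = (if coin then (if R = D then 1 else - 1) else (0::real))"
  have cross: "Bf L W K (?F a ?e) (?F (- b) ?e) = complex_of_real \<beta> * c0 L W K
      \<and> Bf L W K (?F (- a) ?e) (?F b ?e) = complex_of_real \<beta> * c0 L W K" if RA: "R \<noteq> A"
  proof (cases coin)
    case True
    then have jk: "k = j" by (simp add: coin_def)
    then have ba: "b = a" by (simp add: a_def b_def J_def J'_def)
    show ?thesis
    proof (cases "(R = B \<or> R = Bv) \<and> j = 1")
      case True
      have J0: "J = 0" using True by (auto simp: J_def)
      have r: "a + b = K * of_int (- 1)" using ba J0 by (simp add: a_def)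
      have s1: "cnj (?e n) * ?e (n + - 1) = - 1" for n using True eps_prod[of R n "- 1"] by simp
      have s2: "cnj (?e n) * ?e (n + - (- 1)) = - 1" for n using True eps_prod[of R n "1"] by simp
      have bD: "\<beta> = - 1" using True \<open>coin\<close> by (auto simp: \<beta>_def)
      show ?thesis using cross_eq[OF L W K1 r Kint e1 s1 s2] bD by simp
    next
      case False
      then have RD: "R = D" and jc: "j = 1 \<or> j = N" using \<open>coin\<close> by (auto simp: coin_def)
      have bD: "\<beta> = 1" using RD \<open>coin\<close> by (auto simp: \<beta>_def)
      have s0: "cnj (?e n) * ?e (n + r) = 1" for n r using RD eps_prod[of R n r] by simp
      show ?thesis
      proof (cases "j = 1")
        case True
        have J0: "J = 0" using True RD by (auto simp: J_def)
        have r: "a + b = K * of_int (- 1)" using ba J0 by (simp add: a_def)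
        show ?thesis using cross_eq[OF L W K1 r Kint e1 s0 s0] bD by simp
      next
        case False
        then have jN: "j = N" using jc by simp
        have a0: "a = 0" using jN RD j1 by (simp add: a_def J_def K_def of_nat_diff)
        have r: "a + b = K * of_int 0" using ba a0 by simp
        show ?thesis using cross_eq[OF L W K1 r Kint e1 s0 s0] bD by simp
      qed
    qed
  next
    case False
    have rng: "0 < J + J' \<and> J + J' < K"
      using False RA j1 k1 assms(4) unfolding coin_def J_def J'_def K_def
      by (cases R) (auto simp: of_nat_diff)
    have p1: "0 < - (a + b)" and p2: "- (a + b) < K" using rng by (simp_all add: a_def b_def)
    have bD: "\<beta> = 0" using False by (simp add: \<beta>_def)
    show ?thesis using cross_zero[OF L W K1 apbZ Kint e1 p1 p2] bD by simp
  qed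
  show ?thesis
  proof (cases "j = k")
    case False
    then have ncoin: "\<not> coin" by (simp add: coin_def)
    have "Bf L W K (Mfun R N L tau j) (Mfun R N L tau k) = 0"
    proof (cases "R = A")
      case True
      then show ?thesis unfolding expand using D11 D22 ab_iff False by (simp add: sg_def)
    next
      case RA: False
      show ?thesis unfolding expand using D11 D22 ab_iff False cross[OF RA] ncoin by (simp add: \<beta>_def)
    qed
    then show ?thesis unfolding LHS using False by simp
  next
    case True
    then have jk: "k = j" by simp
    then have ba: "b = a" and k21: "k2 = k1" by (simp_all add: a_def b_def J_def J'_def k1_def k2_def)
    define m where "m = (if R = A then 1
              else if R = B \<or> R = Bv then (if j = 1 then 4 else 2)
              else if R = D then (if j = 1 \<or> j = N then 4 else 2)
              else 2::real)"
    have hc: "hconst R N L W tau j = complex_of_real (m * (L * sqrt (L * W / (2 * K)))) * complex_of_real (k1 * k1)"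
    proof -
      have e: "- 2 * tau * complex_of_real pi * \<i> * complex_of_real ((Jfun R j)\<^sup>2) / complex_of_real (calN R N)
          = complex_of_real (pi * W * J^2 / (L * K) + pi * W * J^2 / (L * K))"
        using L Kpos unfolding tau J_def K_def by (simp add: field_simps)
      have c: "L * W / sqrt (2 * calN R N * Im tau) = L * sqrt (L * W / (2 * K))"
      proof -
        have "Im tau = W / L" by (simp add: tau)
        moreover have "L * W / sqrt (2 * K * (W / L)) = L * sqrt (L * W / (2 * K))"
        proof -
          have p0: "2 * K * (W / L) > 0" using L W K1 by simp
          then have p: "sqrt (2 * K * (W / L)) > 0" by simp
          have "sqrt (L * W / (2 * K)) * sqrt (2 * K * (W / L)) = sqrt (W * W)"
            by (subst real_sqrt_mult[symmetric]) (use L K1 in \<open>simp add: field_simps\<close>)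
          also have "\<dots> = W" using W by simp
          finally have "sqrt (L * W / (2 * K)) * sqrt (2 * K * (W / L)) = W" .
          then show ?thesis using p by (rule aux_div)
        qed
        ultimately show ?thesis unfolding K_def by simp
      qed
      show ?thesis
        unfolding hconst_def Let_def e c exp_of_real exp_add m_def[symmetric] k1_def by (rule refl)
    qed
    have c0d: "c0 L W K = complex_of_real (L * sqrt (L * W / (2 * K)))"
      by (simp add: c0_def[OF L W K1])
    have mval: "m = 1 + sg R * \<beta> + sg R * \<beta> + sg R * sg R" if "R \<noteq> A"
      using that jk assms(4) unfolding m_def \<beta>_def coin_def sg_def by auto
    have "Bf L W K (Mfun R N L tau j) (Mfun R N L tau k) = hconst R N L W tau j"
    proof (cases "R = A")
      case True
      have "m = 1" using True by (simp add: m_def)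
      then show ?thesis unfolding expand hc using D11 D22 ab_iff jk True k21 c0d by (simp add: sg_def)
    next
      case RA: False
      have "Bf L W K (Mfun R N L tau j) (Mfun R N L tau k) =
          complex_of_real (k1 * k1) * (complex_of_real (1 + sg R * \<beta> + sg R * \<beta> + sg R * sg R) * c0 L W K)"
        unfolding expand using D11 D22 ab_iff jk cross[OF RA] k21 by (simp add: algebra_simps)
      then show ?thesis unfolding hc mval[OF RA, symmetric] c0d by (simp add: mult_ac)
    qed
    then show ?thesis unfolding LHS using True by simp
  qed
qed


end
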